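(* Let $N\ge1$, $\alpha>0$, $\tau_0\ge0$, let $c_1,\dots,c_N\in\mathbb{C}\setminus\{0\}$ and let $\mu_1,\dots,\mu_N\in\mathbb{C}$ be pairwise distinct. Let $h:=\tau_0+2$, $Y:=C([-1,1];\mathbb{C})$, $X:=C([-h,0];Y)$ (supremum norms), $J(x,r):=\sum_{i=1}^Nc_ie^{-\mu_i|x-r|}$, and define $L\in\mathcal{L}(X,Y)$ by $(L\phi)(x):=\int_{-1}^1J(x,r)\,\phi(-\tau_0-|x-r|,r)\,dr$. Let $A$ be the operator on $X$ with $D(A)=\{\phi\in X:\phi'\in X,\ \phi'(0)=-\alpha\phi(0)+L\phi\}$, $A\phi=\phi'$. For $\lambda\in\mathbb{C}$ put $k_j(\lambda):=\lambda+\mu_j$, $\mathcal{S}:=\{\lambda:k_i^2=k_j^2\text{ for some }i\neq j\}$ and $$\mathcal{P}(\rho):=\frac{e^{\lambda\tau_0}(\lambda+\alpha)}{2}\prod_{j=1}^N(\rho^2-k_j(\lambda)^2)+\sum_{i=1}^Nc_ik_i(\lambda)\prod_{j\neq i}(\rho^2-k_j(\lambda)^2).$$ Suppose $\lambda\notin\mathcal{S}$ and that $\mathcal{P}$ has $2N$ distinct roots, denoted $\pm\rho_i(\lambda)$, $i=1,\dots,N$. Define the $2N\times2N$ matrix $$S(\lambda):=\begin{bmatrix}S^-_\lambda&S^+_\lambda\\S^+_\lambda&S^-_\lambda\end{bmatrix},\qquad [S^-_\lambda]_{j,i}:=\frac{e^{\rho_i(\lambda)}}{\lambda+\mu_j-\rho_i(\lambda)},\quad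 [S^+_\lambda]_{j,i}:=\frac{e^{-\rho_i(\lambda)}}{\lambda+\mu_j+\rho_i(\lambda)}.$$ If $\det S(\lambda)=0$ and $k_j(\lambda)\neq\pm\rho_i(\lambda)$ for all $i,j=1,\dots,N$, then $\lambda$ belongs to the point spectrum of $A$, and a corresponding eigenfunction is $\varepsilon_\lambda\otimes q_\lambda$, where $$q_\lambda(x)=\sum_{i=1}^N\big[\gamma_ie^{\rho_i(\lambda)x}+\gamma_{-i}e^{-\rho_i(\lambda)x}\big],\qquad x\in[-1,1],$$ and $\Gamma_\lambda=[\gamma_1,\dots,\gamma_N,\gamma_{-1},\dots,\gamma_{-N}]$ is a non-trivial solution of $S(\lambda)\Gamma_\lambda=0$.
   Context: $(\varepsilon_\lambda\otimes q)(\theta):=e^{\lambda\theta}q$ for $\theta\in[-h,0]$. The operator $A$ generates the semigroup of the linearised neural field equation $\dot V(t)=-\alpha V(t)+LV_t$ on $[-1,1]$ with delay $\tau(x,r)=\tau_0+|x-r|$. *)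

theory Defs
  imports "HOL-Analysis.Analysis" "Jordan_Normal_Form.Determinant"
begin

text \<open>Indices are 0-based: i = 0..N-1 stands for the paper's i = 1..N.
  An element of Y = C([-1,1];C) is represented by a function real => complex
  (only its values on [-1,1] matter); an element of X = C([-h,0];Y) by a
  function real => real => complex (theta, x), only values on [-h,0] x [-1,1] matter.\<close>

definition ynorm :: "(real \<Rightarrow> complex) \<Rightarrow> real" where
  "ynorm f = Sup ((\<lambda>x. cmod (f x)) ` {-1..1})"

definition inY :: "(real \<Rightarrow> complex) \<Rightarrow> bool" where
  "inY f \<longleftrightarrow> continuous_on {-1..1} f"

definition inX :: "real \<Rightarrow> (real \<Rightarrow> real \<Rightarrow> complex) \<Rightarrow> bool" where
  "inX h \<phi> \<longleftrightarrow> (\<forall>\<theta>\<in>{-h..0}. inY (\<phi> \<theta>)) \<and>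
     (\<forall>\<theta>\<in>{-h..0}. ((\<lambda>t. ynorm (\<lambda>x. \<phi> t x - \<phi> \<theta> x)) \<longlongrightarrow> 0) (at \<theta> within {-h..0}))"

definition hasXderiv :: "real \<Rightarrow> (real \<Rightarrow> real \<Rightarrow> complex) \<Rightarrow> (real \<Rightarrow> real \<Rightarrow> complex) \<Rightarrow> bool" where
  "hasXderiv h \<phi> \<psi> \<longleftrightarrow> (\<forall>\<theta>\<in>{-h..0}.
     ((\<lambda>t. ynorm (\<lambda>x. (\<phi> t x - \<phi> \<theta> x) / complex_of_real (t - \<theta>) - \<psi> \<theta> x)) \<longlongrightarrow> 0)
       (at \<theta> within {-h..0}))"

definition Jker :: "nat \<Rightarrow> (nat \<Rightarrow> complex) \<Rightarrow> (nat \<Rightarrow> complex) \<Rightarrow> real \<Rightarrow> real \<Rightarrow> complex" where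
  "Jker N c \<mu> x r = (\<Sum>i<N. c i * exp (- \<mu> i * complex_of_real \<bar>x - r\<bar>))"

definition Lop :: "nat \<Rightarrow> (nat \<Rightarrow> complex) \<Rightarrow> (nat \<Rightarrow> complex) \<Rightarrow> real \<Rightarrow>
    (real \<Rightarrow> real \<Rightarrow> complex) \<Rightarrow> real \<Rightarrow> complex" where
  "Lop N c \<mu> \<tau>0 \<phi> x = integral {-1..1} (\<lambda>r. Jker N c \<mu> x r * \<phi> (- \<tau>0 - \<bar>x - r\<bar>) r)"

text \<open>Graph of A: A_rel phi psi means phi in D(A) and A phi = psi (on [-h,0] x [-1,1]),
  with h = tau0 + 2.\<close>
definition A_rel :: "nat \<Rightarrow> real \<Rightarrow> real \<Rightarrow> (nat \<Rightarrow> complex) \<Rightarrow> (nat \<Rightarrow> complex) \<Rightarrow>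
    (real \<Rightarrow> real \<Rightarrow> complex) \<Rightarrow> (real \<Rightarrow> real \<Rightarrow> complex) \<Rightarrow> bool" where
  "A_rel N \<alpha> \<tau>0 c \<mu> \<phi> \<psi> \<longleftrightarrow>
     inX (\<tau>0 + 2) \<phi> \<and> inX (\<tau>0 + 2) \<psi> \<and> hasXderiv (\<tau>0 + 2) \<phi> \<psi> \<and>
     (\<forall>x\<in>{-1..1}. \<psi> 0 x = - complex_of_real \<alpha> * \<phi> 0 x + Lop N c \<mu> \<tau>0 \<phi> x)"

definition Xzero :: "real \<Rightarrow> (real \<Rightarrow> real \<Rightarrow> complex) \<Rightarrow> bool" where
  "Xzero h \<phi> \<longleftrightarrow> (\<forall>\<theta>\<in>{-h..0}. \<forall>x\<in>{-1..1}. \<phi> \<theta> x = 0)"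

definition eigenfunction :: "nat \<Rightarrow> real \<Rightarrow> real \<Rightarrow> (nat \<Rightarrow> complex) \<Rightarrow> (nat \<Rightarrow> complex) \<Rightarrow>
    complex \<Rightarrow> (real \<Rightarrow> real \<Rightarrow> complex) \<Rightarrow> bool" where
  "eigenfunction N \<alpha> \<tau>0 c \<mu> lam \<phi> \<longleftrightarrow>
     \<not> Xzero (\<tau>0 + 2) \<phi> \<and> A_rel N \<alpha> \<tau>0 c \<mu> \<phi> (\<lambda>\<theta> x. lam * \<phi> \<theta> x)"

definition point_spectrum :: "nat \<Rightarrow> real \<Rightarrow> real \<Rightarrow> (nat \<Rightarrow> complex) \<Rightarrow> (nat \<Rightarrow> complex) \<Rightarrow> complex set" where
  "point_spectrum N \<alpha> \<tau>0 c \<mu> = {lam. \<exists>\<phi>. eigenfunction N \<alpha> \<tau>0 c \<mu> lam \<phi>}"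

definition eps_tensor :: "complex \<Rightarrow> (real \<Rightarrow> complex) \<Rightarrow> real \<Rightarrow> real \<Rightarrow> complex" where
  "eps_tensor lam q = (\<lambda>\<theta> x. exp (lam * complex_of_real \<theta>) * q x)"

definition kk :: "(nat \<Rightarrow> complex) \<Rightarrow> complex \<Rightarrow> nat \<Rightarrow> complex" where
  "kk \<mu> lam j = lam + \<mu> j"

definition Sset :: "nat \<Rightarrow> (nat \<Rightarrow> complex) \<Rightarrow> complex set" where
  "Sset N \<mu> = {lam. \<exists>i<N. \<exists>j<N. i \<noteq> j \<and> (kk \<mu> lam i)\<^sup>2 = (kk \<mu> lam j)\<^sup>2}"

definition Ppoly :: "nat \<Rightarrow> real \<Rightarrow> real \<Rightarrow> (nat \<Rightarrow> complex) \<Rightarrow> (nat \<Rightarrow> complex) \<Rightarrow>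
    complex \<Rightarrow> complex \<Rightarrow> complex" where
  "Ppoly N \<alpha> \<tau>0 c \<mu> lam \<rho> =
     exp (lam * complex_of_real \<tau>0) * (lam + complex_of_real \<alpha>) / 2 *
       (\<Prod>j<N. \<rho>\<^sup>2 - (kk \<mu> lam j)\<^sup>2)
     + (\<Sum>i<N. c i * kk \<mu> lam i * (\<Prod>j\<in>{..<N} - {i}. \<rho>\<^sup>2 - (kk \<mu> lam j)\<^sup>2))"

definition Sminus :: "(nat \<Rightarrow> complex) \<Rightarrow> (nat \<Rightarrow> complex) \<Rightarrow> complex \<Rightarrow> nat \<Rightarrow> nat \<Rightarrow> complex" where
  "Sminus \<mu> \<rho> lam j i = exp (\<rho> i) / (lam + \<mu> j - \<rho> i)"

definition Splus :: "(nat \<Rightarrow> complex) \<Rightarrow> (nat \<Rightarrow> complex) \<Rightarrow> complex \<Rightarrow> nat \<Rightarrow> nat \<Rightarrow> complex" where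
  "Splus \<mu> \<rho> lam j i = exp (- \<rho> i) / (lam + \<mu> j + \<rho> i)"

definition Smat :: "nat \<Rightarrow> (nat \<Rightarrow> complex) \<Rightarrow> (nat \<Rightarrow> complex) \<Rightarrow> complex \<Rightarrow> complex mat" where
  "Smat N \<mu> \<rho> lam = mat (2 * N) (2 * N) (\<lambda>(j, i).
     if j < N then (if i < N then Sminus \<mu> \<rho> lam j i else Splus \<mu> \<rho> lam j (i - N))
     else (if i < N then Splus \<mu> \<rho> lam (j - N) i else Sminus \<mu> \<rho> lam (j - N) (i - N)))"

text \<open>q(x) = sum_i gamma_i e^{rho_i x} + gamma_{-i} e^{-rho_i x}, with
  Gamma = [gamma_1..gamma_N, gamma_{-1}..gamma_{-N}] stored 0-based.\<close>
definition qfun :: "nat \<Rightarrow> (nat \<Rightarrow> complex) \<Rightarrow> complex vec \<Rightarrow> real \<Rightarrow> complex" where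
  "qfun N \<rho> \<Gamma> x = (\<Sum>i<N. \<Gamma> $ i * exp (\<rho> i * complex_of_real x)
                         + \<Gamma> $ (N + i) * exp (- \<rho> i * complex_of_real x))"

end

theory Submission
  imports Defs
begin

lemma dexp: "((\<lambda>r::real. exp (a * complex_of_real r)) has_vector_derivative (a * exp (a * of_real r))) (at r within s)"
  by (rule has_vector_derivative_real_field) (auto intro!: derivative_eq_intros)

lemma ynorm_le:
  assumes "\<forall>x\<in>{-1..1}. cmod (f x) \<le> B"
  shows "ynorm f \<le> B" "0 \<le> ynorm f"
proof -
  show "ynorm f \<le> B" unfolding ynorm_def using assms by (intro cSup_least) auto
  have "bdd_above ((\<lambda>x. cmod (f x)) ` {-1..1})" using assms by (auto intro: bdd_aboveI2)
  then have "cmod (f 0) \<le> ynorm f" unfolding ynorm_def by (intro cSup_upper) auto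
  then show "0 \<le> ynorm f" by (meson norm_ge_zero order_trans)
qed

lemma cont_bound:
  assumes "continuous_on {-1..1::real} (q::real \<Rightarrow> complex)"
  obtains M where "M > 0" "\<forall>x\<in>{-1..1}. cmod (q x) \<le> M"
proof -
  have "compact (q ` {-1..1})" using assms by (intro compact_continuous_image) auto
  then have "bounded (q ` {-1..1})" by (rule compact_imp_bounded)
  then obtain M where "M > 0" "\<forall>y\<in>q ` {-1..1}. norm y \<le> M" by (auto simp: bounded_pos)
  then show ?thesis using that by auto
qed

lemma ynorm_tendsto0:
  assumes "continuous_on {-1..1::real} (q::real \<Rightarrow> complex)"
    and "(g \<longlongrightarrow> 0) F"
  shows "((\<lambda>t. ynorm (\<lambda>x. g t * q x)) \<longlongrightarrow> 0) F"
proof -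
  obtain M where M: "M > 0" "\<forall>x\<in>{-1..1}. cmod (q x) \<le> M" using cont_bound[OF assms(1)] by blast
  have b: "\<forall>x\<in>{-1..1}. cmod (g t * q x) \<le> cmod (g t) * M" for t
    using M by (auto simp: norm_mult intro: mult_left_mono)
  have "((\<lambda>t. cmod (g t) * M) \<longlongrightarrow> 0 * M) F"
    by (intro tendsto_intros) (use assms(2) tendsto_norm_zero in blast)
  then have h: "((\<lambda>t. cmod (g t) * M) \<longlongrightarrow> 0) F" by simp
  show ?thesis
    by (rule tendsto_sandwich[OF _ _ tendsto_const h]) (use ynorm_le[OF b] in auto)
qed

lemma eps_inX:
  assumes "continuous_on {-1..1::real} q"
  shows "inX h (eps_tensor lam q)"
  unfolding inX_def inY_def eps_tensor_def
proof (intro conjI ballI)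
  fix \<theta> :: real
  show "continuous_on {-1..1} (\<lambda>x. exp (lam * complex_of_real \<theta>) * q x)"
    using assms by (intro continuous_intros)
  have "((\<lambda>t. exp (lam * complex_of_real t) - exp (lam * complex_of_real \<theta>)) \<longlongrightarrow>
     exp (lam * complex_of_real \<theta>) - exp (lam * complex_of_real \<theta>)) (at \<theta> within {-h..0})"
    by (intro tendsto_intros)
  then have "((\<lambda>t. exp (lam * complex_of_real t) - exp (lam * complex_of_real \<theta>)) \<longlongrightarrow> 0) (at \<theta> within {-h..0})"
    by simp
  from ynorm_tendsto0[OF assms this]
  show "((\<lambda>t. ynorm (\<lambda>x. exp (lam * complex_of_real t) * q x - exp (lam * complex_of_real \<theta>) * q x)) \<longlongrightarrow> 0)
          (at \<theta> within {-h..0})"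
    by (simp add: algebra_simps)
qed

lemma quot_tendsto:
  "((\<lambda>t. (exp (lam * complex_of_real t) - exp (lam * complex_of_real \<theta>)) / complex_of_real (t - \<theta>)
      - lam * exp (lam * complex_of_real \<theta>)) \<longlongrightarrow> 0) (at \<theta> within S)"
proof -
  let ?e = "\<lambda>t::real. exp (lam * complex_of_real t)"
  let ?v = "lam * exp (lam * complex_of_real \<theta>)"
  have "(?e has_derivative (\<lambda>x. x *\<^sub>R ?v)) (at \<theta> within S)"
    using dexp[of lam \<theta> S] by (simp add: has_vector_derivative_def)
  then have "((\<lambda>y. (1 / norm (y - \<theta>)) *\<^sub>R (?e y - (?e \<theta> + (y - \<theta>) *\<^sub>R ?v))) \<longlongrightarrow> 0) (at \<theta> within S)"
    by (simp add: has_derivative_within)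
  then have "((\<lambda>y. norm ((1 / norm (y - \<theta>)) *\<^sub>R (?e y - (?e \<theta> + (y - \<theta>) *\<^sub>R ?v)))) \<longlongrightarrow> 0) (at \<theta> within S)"
    using tendsto_norm_zero by blast
  moreover have "\<forall>\<^sub>F y in at \<theta> within S. norm ((1 / norm (y - \<theta>)) *\<^sub>R (?e y - (?e \<theta> + (y - \<theta>) *\<^sub>R ?v)))
      = norm ((?e y - ?e \<theta>) / complex_of_real (y - \<theta>) - ?v)"
  proof -
    have ev: "\<forall>\<^sub>F y in at \<theta> within S. y \<noteq> \<theta>" by (simp add: eventually_at_filter)
    show ?thesis
    proof (rule eventually_mono[OF ev])
    fix y :: real assume "y \<noteq> \<theta>"
    then have ne: "complex_of_real (y - \<theta>) \<noteq> 0" by simp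
    have "(?e y - ?e \<theta>) / complex_of_real (y - \<theta>) - ?v = (?e y - (?e \<theta> + (y - \<theta>) *\<^sub>R ?v)) / complex_of_real (y - \<theta>)"
      using ne by (simp add: field_simps scaleR_conv_of_real)
    then show "norm ((1 / norm (y - \<theta>)) *\<^sub>R (?e y - (?e \<theta> + (y - \<theta>) *\<^sub>R ?v)))
      = norm ((?e y - ?e \<theta>) / complex_of_real (y - \<theta>) - ?v)"
      by (simp only: norm_mult norm_inverse norm_divide norm_scaleR scaleR_conv_of_real divide_inverse norm_of_real of_real_diff) (simp add: divide_inverse flip: of_real_diff)
  qed
  qed
  ultimately have "((\<lambda>y. norm ((?e y - ?e \<theta>) / complex_of_real (y - \<theta>) - ?v)) \<longlongrightarrow> 0) (at \<theta> within S)"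
    by (rule Lim_transform_eventually)
  then show ?thesis using tendsto_norm_zero_iff by blast
qed

lemma eps_deriv:
  assumes "continuous_on {-1..1::real} q"
  shows "hasXderiv h (eps_tensor lam q) (\<lambda>\<theta> x. lam * eps_tensor lam q \<theta> x)"
  unfolding hasXderiv_def eps_tensor_def
proof
  fix \<theta> :: real
  from ynorm_tendsto0[OF assms quot_tendsto[of lam \<theta> "{-h..0}"]]
  show "((\<lambda>t. ynorm (\<lambda>x. (exp (lam * complex_of_real t) * q x - exp (lam * complex_of_real \<theta>) * q x) /
                complex_of_real (t - \<theta>) - lam * (exp (lam * complex_of_real \<theta>) * q x))) \<longlongrightarrow> 0)
          (at \<theta> within {-h..0})"
    by (simp add: algebra_simps diff_divide_distrib)
qed

lemma dsum: fixes a b :: "nat \<Rightarrow> complex" shows "((\<lambda>x::real. \<Sum>m\<in>I. b m * exp (a m * of_real x)) has_vector_derivative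
   (\<Sum>m\<in>I. b m * (a m * exp (a m * of_real x)))) (at x)"
proof -
  have "((\<lambda>z. \<Sum>m\<in>I. b m * exp (a m * z)) has_field_derivative (\<Sum>m\<in>I. b m * (a m * exp (a m * of_real x)))) (at (of_real x))"
    by (auto intro!: derivative_eq_intros sum.cong)
  then show ?thesis by (rule has_vector_derivative_real_field)
qed

lemma exp_indep:
  fixes a b :: "nat \<Rightarrow> complex" and I :: "nat set"
  assumes "finite I" "inj_on a I" "\<forall>x\<in>{-1<..<1::real}. (\<Sum>m\<in>I. b m * exp (a m * of_real x)) = 0"
  shows "\<forall>m\<in>I. b m = 0"
  using assms
proof (induction I arbitrary: b rule: finite_induct)
  case empty
  then show ?case by simp
next
  case (insert n I)
  have injI: "inj_on a I" using insert.prems(1) by (simp add: inj_on_insert)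
  have ane: "a m \<noteq> a n" if "m \<in> I" for m using insert.prems(1) insert.hyps(2) that by (auto simp: inj_on_def)
  let ?f = "\<lambda>x::real. \<Sum>m\<in>insert n I. b m * exp (a m * of_real x)"
  have d0: "(\<Sum>m\<in>insert n I. b m * (a m * exp (a m * of_real x))) = 0" if x: "x \<in> {-1<..<1}" for x
  proof -
    have "((\<lambda>x. 0) has_vector_derivative (\<Sum>m\<in>insert n I. b m * (a m * exp (a m * of_real x)))) (at x)"
      by (rule has_vector_derivative_transform_within_open[OF dsum _ x]) (use insert.prems(2) in auto)
    from vector_derivative_unique_at[OF has_vector_derivative_const this] show ?thesis by simp
  qed
  have "\<forall>x\<in>{-1<..<1::real}. (\<Sum>m\<in>I. (b m * (a m - a n)) * exp (a m * of_real x)) = 0"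
  proof
    fix x :: real assume x: "x \<in> {-1<..<1}"
    have "(\<Sum>m\<in>insert n I. (b m * (a m - a n)) * exp (a m * of_real x))
        = (\<Sum>m\<in>insert n I. b m * (a m * exp (a m * of_real x))) - a n * ?f x"
      by (simp add: sum_distrib_left sum_subtractf[symmetric] algebra_simps)
    also have "\<dots> = 0" using d0[OF x] insert.prems(2) x by simp
    finally show "(\<Sum>m\<in>I. (b m * (a m - a n)) * exp (a m * of_real x)) = 0"
      using insert.hyps by simp
  qed
  from insert.IH[OF injI this] ane have bI: "\<forall>m\<in>I. b m = 0" by auto
  have z: "(0::real) \<in> {-1<..<1}" by simp
  have "?f 0 = 0" using bspec[OF insert.prems(2) z] .
  then have "b n = 0" using bI insert.hyps by simp
  with bI show ?case by auto
qed


lemma exp2: "u + v = w1 + w2 \<Longrightarrow> exp (u::complex) * exp v = exp w1 * exp w2"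
  by (metis exp_add)

lemma dexpc: fixes a c :: complex
  shows "((\<lambda>r::real. c * exp (a * complex_of_real r)) has_vector_derivative (c * (a * exp (a * of_real r)))) (at r within s)"
proof -
  have "((\<lambda>z. c * exp (a * z)) has_field_derivative (c * (a * exp (a * of_real r)))) (at (of_real r))"
    by (auto intro!: derivative_eq_intros)
  then show ?thesis by (rule has_vector_derivative_real_field)
qed

definition Iint :: "complex \<Rightarrow> complex \<Rightarrow> real \<Rightarrow> complex" where
  "Iint k \<rho> x = exp (\<rho> * of_real x) * (2 * k / (k\<^sup>2 - \<rho>\<^sup>2))
     - exp (- k * (of_real x + 1)) * exp (- \<rho>) / (k + \<rho>)
     - exp (k * (of_real x - 1)) * exp \<rho> / (k - \<rho>)"

lemma field_aux: fixes k \<rho> A B C :: complex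
  assumes "k + \<rho> \<noteq> 0" "k - \<rho> \<noteq> 0"
  shows "A / (k + \<rho>) - B / (k + \<rho>) + (C / (\<rho> - k) - A / (\<rho> - k)) =
     A * (2 * k / (k\<^sup>2 - \<rho>\<^sup>2)) - B / (k + \<rho>) - C / (k - \<rho>)"
proof -
  have h1: "X / (\<rho> - k) = - (X / (k - \<rho>))" for X
    by (metis divide_minus_right minus_diff_eq)
  have sq: "k\<^sup>2 - \<rho>\<^sup>2 = (k + \<rho>) * (k - \<rho>)" by (simp add: power2_eq_square algebra_simps)
  have h2: "A * (2 * k / (k\<^sup>2 - \<rho>\<^sup>2)) = A / (k + \<rho>) + A / (k - \<rho>)"
    unfolding sq using assms by (simp add: field_simps)
  show ?thesis unfolding h1 h2 by (simp add: algebra_simps)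
qed

lemma basic_int:
  fixes k \<rho> :: complex and x :: real
  assumes "k + \<rho> \<noteq> 0" "k - \<rho> \<noteq> 0" "x \<in> {-1..1}"
  shows "((\<lambda>r. exp (- k * of_real \<bar>x - r\<bar>) * exp (\<rho> * of_real r)) has_integral Iint k \<rho> x) {-1..1}"
proof -
  let ?g = "\<lambda>r::real. exp (- k * of_real \<bar>x - r\<bar>) * exp (\<rho> * of_real r)"
  let ?c1 = "exp (- k * of_real x) / (k + \<rho>)"
  let ?F1 = "\<lambda>r::real. ?c1 * exp ((k + \<rho>) * of_real r)"
  let ?c2 = "exp (k * of_real x) / (\<rho> - k)"
  let ?F2 = "\<lambda>r::real. ?c2 * exp ((\<rho> - k) * of_real r)"
  have rk: "\<rho> - k \<noteq> 0" using assms(2) by (metis minus_diff_eq neg_equal_0_iff_equal)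
  have i1: "(?g has_integral (?F1 x - ?F1 (-1))) {-1..x}"
  proof (rule fundamental_theorem_of_calculus)
    show "-1 \<le> x" using assms by simp
    fix r assume r: "r \<in> {-1..x}"
    have "?g r = ?c1 * ((k + \<rho>) * exp ((k + \<rho>) * of_real r))"
    proof -
      have "\<bar>x - r\<bar> = x - r" using r by simp
      then have "?g r = exp (- k * of_real x) * exp ((k + \<rho>) * of_real r)"
        by (simp, intro exp2) (simp add: algebra_simps)
      then show ?thesis using assms(1) by simp
    qed
    then show "(?F1 has_vector_derivative ?g r) (at r within {-1..x})" using dexpc by metis
  qed
  have i2: "(?g has_integral (?F2 1 - ?F2 x)) {x..1}"
  proof (rule fundamental_theorem_of_calculus)
    show "x \<le> 1" using assms by simp
    fix r assume r: "r \<in> {x..1}"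
    have "?g r = ?c2 * ((\<rho> - k) * exp ((\<rho> - k) * of_real r))"
    proof -
      have "\<bar>x - r\<bar> = r - x" using r by simp
      then have "?g r = exp (k * of_real x) * exp ((\<rho> - k) * of_real r)"
        by (simp, intro exp2) (simp add: algebra_simps)
      then show ?thesis using rk by simp
    qed
    then show "(?F2 has_vector_derivative ?g r) (at r within {x..1})" using dexpc by metis
  qed
  have "(?g has_integral ((?F1 x - ?F1 (-1)) + (?F2 1 - ?F2 x))) {-1..1}"
    by (rule has_integral_combine[OF _ _ i1 i2]) (use assms in auto)
  moreover have "(?F1 x - ?F1 (-1)) + (?F2 1 - ?F2 x) = Iint k \<rho> x"
  proof -
    have e1: "exp (- k * of_real x) * exp ((k + \<rho>) * of_real x) = exp (\<rho> * of_real x)"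
      by (simp add: exp_add[symmetric] algebra_simps)
    have e2: "exp (- k * of_real x) * exp ((k + \<rho>) * of_real (-1)) = exp (- k * (of_real x + 1)) * exp (- \<rho>)"
      by (intro exp2) (simp add: algebra_simps)
    have e3: "exp (k * of_real x) * exp ((\<rho> - k) * of_real 1) = exp (k * (of_real x - 1)) * exp \<rho>"
      by (intro exp2) (simp add: algebra_simps)
    have e4: "exp (k * of_real x) * exp ((\<rho> - k) * of_real x) = exp (\<rho> * of_real x)"
      by (simp add: exp_add[symmetric] algebra_simps)
    have f1: "?F1 x = exp (\<rho> * of_real x) / (k + \<rho>)"
    proof -
      have "?F1 x = exp (- k * of_real x) * exp ((k + \<rho>) * of_real x) / (k + \<rho>)" by simp
      then show ?thesis by (simp only: e1)
    qed
    have f2: "?F1 (-1) = exp (- k * (of_real x + 1)) * exp (- \<rho>) / (k + \<rho>)"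
    proof -
      have "?F1 (-1) = exp (- k * of_real x) * exp ((k + \<rho>) * of_real (-1)) / (k + \<rho>)" by simp
      then show ?thesis by (simp only: e2)
    qed
    have f3: "?F2 1 = exp (k * (of_real x - 1)) * exp \<rho> / (\<rho> - k)"
    proof -
      have "?F2 1 = exp (k * of_real x) * exp ((\<rho> - k) * of_real 1) / (\<rho> - k)" by simp
      then show ?thesis by (simp only: e3)
    qed
    have f4: "?F2 x = exp (\<rho> * of_real x) / (\<rho> - k)"
    proof -
      have "?F2 x = exp (k * of_real x) * exp ((\<rho> - k) * of_real x) / (\<rho> - k)" by simp
      then show ?thesis by (simp only: e4)
    qed
    have "(?F1 x - ?F1 (-1)) + (?F2 1 - ?F2 x) =
      exp (\<rho> * of_real x) / (k + \<rho>) - exp (- k * (of_real x + 1)) * exp (- \<rho>) / (k + \<rho>)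
      + (exp (k * (of_real x - 1)) * exp \<rho> / (\<rho> - k) - exp (\<rho> * of_real x) / (\<rho> - k))"
      by (simp only: f1 f2 f3 f4)
    also have "\<dots> = Iint k \<rho> x" unfolding Iint_def by (rule field_aux[OF assms(1,2)])
    finally show ?thesis .
  qed
  ultimately show ?thesis by simp
qed
lemma split_sum: fixes N M :: nat and f :: "nat \<Rightarrow> 'a::comm_monoid_add" shows "(\<Sum>m<N+M. f m) = (\<Sum>i<N. f i) + (\<Sum>i<M. f (N+i))"
  by (induction M) (simp_all add: add.assoc)

lemma split2: fixes N :: nat and f :: "nat \<Rightarrow> 'a::comm_monoid_add" shows "(\<Sum>m<2*N. f m) = (\<Sum>i<N. f i) + (\<Sum>i<N. f (N+i))"
  using split_sum[where N=N and M=N and f=f] by (simp add: mult_2)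

lemma Pdiv:
  fixes D c kk :: "nat \<Rightarrow> complex" and Z :: complex
  assumes "\<forall>j<N. D j \<noteq> 0"
    and "Z * (\<Prod>j<N. D j) + (\<Sum>i<N. c i * kk i * (\<Prod>j\<in>{..<N} - {i}. D j)) = 0"
  shows "(\<Sum>i<N. c i * kk i / D i) = - Z"
proof -
  have PD: "(\<Prod>j<N. D j) \<noteq> 0" using assms(1) by simp
  have "(\<Prod>j\<in>{..<N} - {i}. D j) = (\<Prod>j<N. D j) / D i" if "i < N" for i
    using that assms(1) by (simp add: prod_diff1)
  then have "(\<Sum>i<N. c i * kk i * (\<Prod>j\<in>{..<N} - {i}. D j)) = (\<Prod>j<N. D j) * (\<Sum>i<N. c i * kk i / D i)"
    by (simp add: sum_distrib_left algebra_simps)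
  with assms(2) have "(\<Prod>j<N. D j) * (Z + (\<Sum>i<N. c i * kk i / D i)) = 0"
    by (simp add: algebra_simps)
  with PD show ?thesis by (simp add: add_eq_0_iff)
qed

lemma alg:
  fixes k c \<rho> g :: "nat \<Rightarrow> complex" and E L :: complex and x :: real
  assumes hk: "\<forall>i<N. \<forall>j<N. k j + \<rho> i \<noteq> 0 \<and> k j - \<rho> i \<noteq> 0"
    and R1: "\<forall>j<N. (\<Sum>i<N. g i * exp (\<rho> i) / (k j - \<rho> i) + g (N+i) * exp (- \<rho> i) / (k j + \<rho> i)) = 0"
    and R2: "\<forall>j<N. (\<Sum>i<N. g i * exp (- \<rho> i) / (k j + \<rho> i) + g (N+i) * exp (\<rho> i) / (k j - \<rho> i)) = 0"
    and P: "\<forall>i<N. E * (\<Sum>j<N. c j * (2 * k j / ((k j)\<^sup>2 - (\<rho> i)\<^sup>2))) = L"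
  shows "(\<Sum>j<N. \<Sum>i<N. E * c j * (g i * Iint (k j) (\<rho> i) x + g (N+i) * Iint (k j) (- \<rho> i) x))
     = L * (\<Sum>i<N. g i * exp (\<rho> i * of_real x) + g (N+i) * exp (- \<rho> i * of_real x))"
proof -
  define T1 where "T1 j i = E * c j * (2 * k j / ((k j)\<^sup>2 - (\<rho> i)\<^sup>2)) *
      (g i * exp (\<rho> i * of_real x) + g (N+i) * exp (- \<rho> i * of_real x))" for j i
  define t2 where "t2 j i = g i * exp (- \<rho> i) / (k j + \<rho> i) + g (N+i) * exp (\<rho> i) / (k j - \<rho> i)" for j i
  define t3 where "t3 j i = g i * exp (\<rho> i) / (k j - \<rho> i) + g (N+i) * exp (- \<rho> i) / (k j + \<rho> i)" for j i
  have pt: "E * c j * (g i * Iint (k j) (\<rho> i) x + g (N+i) * Iint (k j) (- \<rho> i) x)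
      = T1 j i - E * c j * exp (- k j * (of_real x + 1)) * t2 j i - E * c j * exp (k j * (of_real x - 1)) * t3 j i" for j i
    unfolding T1_def t2_def t3_def Iint_def by (simp add: algebra_simps add_divide_distrib diff_divide_distrib)
  have "(\<Sum>j<N. \<Sum>i<N. E * c j * (g i * Iint (k j) (\<rho> i) x + g (N+i) * Iint (k j) (- \<rho> i) x))
     = (\<Sum>j<N. \<Sum>i<N. T1 j i) - (\<Sum>j<N. E * c j * exp (- k j * (of_real x + 1)) * (\<Sum>i<N. t2 j i))
        - (\<Sum>j<N. E * c j * exp (k j * (of_real x - 1)) * (\<Sum>i<N. t3 j i))"
    by (simp add: pt sum_subtractf sum_distrib_left)
  also have "(\<Sum>j<N. E * c j * exp (- k j * (of_real x + 1)) * (\<Sum>i<N. t2 j i)) = 0"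
    using R2 by (simp add: t2_def)
  also have "(\<Sum>j<N. E * c j * exp (k j * (of_real x - 1)) * (\<Sum>i<N. t3 j i)) = 0"
    using R1 by (simp add: t3_def)
  also have "(\<Sum>j<N. \<Sum>i<N. T1 j i) = (\<Sum>i<N. \<Sum>j<N. T1 j i)" by (rule sum.swap)
  also have "\<dots> = (\<Sum>i<N. L * (g i * exp (\<rho> i * of_real x) + g (N+i) * exp (- \<rho> i * of_real x)))"
  proof (rule sum.cong[OF refl])
    fix i assume "i \<in> {..<N}"
    then have "E * (\<Sum>j<N. c j * (2 * k j / ((k j)\<^sup>2 - (\<rho> i)\<^sup>2))) = L" using P by auto
    moreover have "(\<Sum>j<N. T1 j i) = (E * (\<Sum>j<N. c j * (2 * k j / ((k j)\<^sup>2 - (\<rho> i)\<^sup>2)))) *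
        (g i * exp (\<rho> i * of_real x) + g (N+i) * exp (- \<rho> i * of_real x))"
      unfolding T1_def by (simp only: sum_distrib_left sum_distrib_right mult.assoc)
    ultimately show "(\<Sum>j<N. T1 j i) = L * (g i * exp (\<rho> i * of_real x) + g (N+i) * exp (- \<rho> i * of_real x))"
      by simp
  qed
  finally show ?thesis by (simp add: sum_distrib_left)
qed


lemma Lop_eq:
  fixes N :: nat and c \<mu> \<rho> :: "nat \<Rightarrow> complex" and lam :: complex and \<tau>0 x :: real and \<Gamma> :: "complex vec"
  assumes hk: "\<forall>i<N. \<forall>j<N. kk \<mu> lam j + \<rho> i \<noteq> 0 \<and> kk \<mu> lam j - \<rho> i \<noteq> 0" and x: "x \<in> {-1..1}"
  shows "Lop N c \<mu> \<tau>0 (eps_tensor lam (qfun N \<rho> \<Gamma>)) x =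
    (\<Sum>j<N. \<Sum>i<N. exp (- (lam * of_real \<tau>0)) * c j *
       (\<Gamma> $ i * Iint (kk \<mu> lam j) (\<rho> i) x + \<Gamma> $ (N+i) * Iint (kk \<mu> lam j) (- \<rho> i) x))"
proof -
  let ?E = "exp (- (lam * of_real \<tau>0))"
  let ?h = "\<lambda>j r. exp (- kk \<mu> lam j * of_real \<bar>x - r\<bar>)"
  let ?Q = "\<lambda>i r. \<Gamma> $ i * exp (\<rho> i * complex_of_real r) + \<Gamma> $ (N + i) * exp (- \<rho> i * complex_of_real r)"
  have pw: "Jker N c \<mu> x r * eps_tensor lam (qfun N \<rho> \<Gamma>) (- \<tau>0 - \<bar>x - r\<bar>) r =
     (\<Sum>j<N. \<Sum>i<N. ?E * c j * (\<Gamma> $ i * (?h j r * exp (\<rho> i * of_real r))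
        + \<Gamma> $ (N+i) * (?h j r * exp (- \<rho> i * of_real r))))" for r
  proof -
    let ?e = "exp (lam * complex_of_real (- \<tau>0 - \<bar>x - r\<bar>))"
    have key: "exp (- \<mu> j * of_real \<bar>x - r\<bar>) * ?e = ?E * ?h j r" for j
      by (intro exp2) (simp add: kk_def algebra_simps)
    have "Jker N c \<mu> x r * eps_tensor lam (qfun N \<rho> \<Gamma>) (- \<tau>0 - \<bar>x - r\<bar>) r
       = (\<Sum>j<N. c j * exp (- \<mu> j * of_real \<bar>x - r\<bar>)) * (\<Sum>i<N. ?e * ?Q i r)"
      unfolding Jker_def eps_tensor_def qfun_def by (simp only: sum_distrib_left)
    also have "\<dots> = (\<Sum>j<N. \<Sum>i<N. (c j * exp (- \<mu> j * of_real \<bar>x - r\<bar>)) * (?e * ?Q i r))"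
      by (rule sum_product)
    also have "\<dots> = (\<Sum>j<N. \<Sum>i<N. c j * (exp (- \<mu> j * of_real \<bar>x - r\<bar>) * ?e) * ?Q i r)"
      by (simp only: mult.assoc)
    also have "\<dots> = (\<Sum>j<N. \<Sum>i<N. c j * (?E * ?h j r) * ?Q i r)"
      by (simp only: key)
    also have "\<dots> = (\<Sum>j<N. \<Sum>i<N. ?E * c j * (\<Gamma> $ i * (?h j r * exp (\<rho> i * of_real r))
        + \<Gamma> $ (N+i) * (?h j r * exp (- \<rho> i * of_real r))))"
      by (simp add: algebra_simps)
    finally show ?thesis .
  qed
  have "((\<lambda>r. \<Sum>j<N. \<Sum>i<N. ?E * c j * (\<Gamma> $ i * (?h j r * exp (\<rho> i * of_real r))
        + \<Gamma> $ (N+i) * (?h j r * exp (- \<rho> i * of_real r)))) has_integral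
     (\<Sum>j<N. \<Sum>i<N. ?E * c j *
       (\<Gamma> $ i * Iint (kk \<mu> lam j) (\<rho> i) x + \<Gamma> $ (N+i) * Iint (kk \<mu> lam j) (- \<rho> i) x))) {-1..1}"
  proof (intro has_integral_sum finite_lessThan has_integral_mult_right has_integral_add)
    fix j i assume j: "j \<in> {..<N}" and i: "i \<in> {..<N}"
    then have a: "kk \<mu> lam j + \<rho> i \<noteq> 0" "kk \<mu> lam j - \<rho> i \<noteq> 0" using hk by auto
    show "((\<lambda>r. ?h j r * exp (\<rho> i * of_real r)) has_integral Iint (kk \<mu> lam j) (\<rho> i) x) {-1..1}"
      by (rule basic_int[OF a x])
    have b: "kk \<mu> lam j + - \<rho> i \<noteq> 0" "kk \<mu> lam j - - \<rho> i \<noteq> 0" using a by simp_all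
    show "((\<lambda>r. ?h j r * exp (- \<rho> i * of_real r)) has_integral Iint (kk \<mu> lam j) (- \<rho> i) x) {-1..1}"
      by (rule basic_int[OF b x])
  qed
  then show ?thesis unfolding Lop_def using pw by (simp add: integral_unique)
qed

lemma mat_rows:
  fixes N :: nat and \<mu> \<rho> :: "nat \<Rightarrow> complex" and lam :: complex and \<Gamma> :: "complex vec"
  assumes G: "\<Gamma> \<in> carrier_vec (2*N)" and S: "Smat N \<mu> \<rho> lam *\<^sub>v \<Gamma> = 0\<^sub>v (2*N)"
  shows "\<forall>j<N. (\<Sum>i<N. \<Gamma> $ i * exp (\<rho> i) / (kk \<mu> lam j - \<rho> i) + \<Gamma> $ (N+i) * exp (- \<rho> i) / (kk \<mu> lam j + \<rho> i)) = 0"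
    and "\<forall>j<N. (\<Sum>i<N. \<Gamma> $ i * exp (- \<rho> i) / (kk \<mu> lam j + \<rho> i) + \<Gamma> $ (N+i) * exp (\<rho> i) / (kk \<mu> lam j - \<rho> i)) = 0"
proof -
  have dG: "dim_vec \<Gamma> = 2*N" using G by simp
  have row: "(\<Sum>t<2*N. Smat N \<mu> \<rho> lam $$ (m,t) * \<Gamma> $ t) = 0" if m: "m < 2*N" for m
  proof -
    have "(Smat N \<mu> \<rho> lam *\<^sub>v \<Gamma>) $ m = 0" using S m by simp
    moreover have "(Smat N \<mu> \<rho> lam *\<^sub>v \<Gamma>) $ m = (\<Sum>t<2*N. Smat N \<mu> \<rho> lam $$ (m,t) * \<Gamma> $ t)"
      using m dG by (simp add: Smat_def scalar_prod_def row_def atLeast0LessThan)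
    ultimately show ?thesis by simp
  qed
  show "\<forall>j<N. (\<Sum>i<N. \<Gamma> $ i * exp (\<rho> i) / (kk \<mu> lam j - \<rho> i) + \<Gamma> $ (N+i) * exp (- \<rho> i) / (kk \<mu> lam j + \<rho> i)) = 0"
  proof (intro allI impI)
    fix j assume j: "j < N"
    have "(\<Sum>t<2*N. Smat N \<mu> \<rho> lam $$ (j,t) * \<Gamma> $ t) = 0" using row j by simp
    then have "(\<Sum>i<N. Smat N \<mu> \<rho> lam $$ (j,i) * \<Gamma> $ i) + (\<Sum>i<N. Smat N \<mu> \<rho> lam $$ (j,N+i) * \<Gamma> $ (N+i)) = 0"
      by (simp only: split2)
    moreover have "(\<Sum>i<N. Smat N \<mu> \<rho> lam $$ (j,i) * \<Gamma> $ i) + (\<Sum>i<N. Smat N \<mu> \<rho> lam $$ (j,N+i) * \<Gamma> $ (N+i))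
      = (\<Sum>i<N. \<Gamma> $ i * exp (\<rho> i) / (kk \<mu> lam j - \<rho> i) + \<Gamma> $ (N+i) * exp (- \<rho> i) / (kk \<mu> lam j + \<rho> i))"
      using j by (simp add: Smat_def Sminus_def Splus_def kk_def sum.distrib algebra_simps)
    ultimately show "(\<Sum>i<N. \<Gamma> $ i * exp (\<rho> i) / (kk \<mu> lam j - \<rho> i) + \<Gamma> $ (N+i) * exp (- \<rho> i) / (kk \<mu> lam j + \<rho> i)) = 0"
      by simp
  qed
  show "\<forall>j<N. (\<Sum>i<N. \<Gamma> $ i * exp (- \<rho> i) / (kk \<mu> lam j + \<rho> i) + \<Gamma> $ (N+i) * exp (\<rho> i) / (kk \<mu> lam j - \<rho> i)) = 0"
  proof (intro allI impI)
    fix j assume j: "j < N"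
    have "(\<Sum>t<2*N. Smat N \<mu> \<rho> lam $$ (N+j,t) * \<Gamma> $ t) = 0" using row j by simp
    then have "(\<Sum>i<N. Smat N \<mu> \<rho> lam $$ (N+j,i) * \<Gamma> $ i) + (\<Sum>i<N. Smat N \<mu> \<rho> lam $$ (N+j,N+i) * \<Gamma> $ (N+i)) = 0"
      by (simp only: split2)
    moreover have "(\<Sum>i<N. Smat N \<mu> \<rho> lam $$ (N+j,i) * \<Gamma> $ i) + (\<Sum>i<N. Smat N \<mu> \<rho> lam $$ (N+j,N+i) * \<Gamma> $ (N+i))
      = (\<Sum>i<N. \<Gamma> $ i * exp (- \<rho> i) / (kk \<mu> lam j + \<rho> i) + \<Gamma> $ (N+i) * exp (\<rho> i) / (kk \<mu> lam j - \<rho> i))"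
      using j by (simp add: Smat_def Sminus_def Splus_def kk_def sum.distrib algebra_simps)
    ultimately show "(\<Sum>i<N. \<Gamma> $ i * exp (- \<rho> i) / (kk \<mu> lam j + \<rho> i) + \<Gamma> $ (N+i) * exp (\<rho> i) / (kk \<mu> lam j - \<rho> i)) = 0"
      by simp
  qed
qed

lemma Pfact:
  fixes N :: nat and \<alpha> \<tau>0 :: real and c \<mu> \<rho> :: "nat \<Rightarrow> complex" and lam :: complex
  assumes hk: "\<forall>i<N. \<forall>j<N. kk \<mu> lam j + \<rho> i \<noteq> 0 \<and> kk \<mu> lam j - \<rho> i \<noteq> 0"
    and i: "i < N" and P0: "Ppoly N \<alpha> \<tau>0 c \<mu> lam (\<rho> i) = 0"
  shows "exp (- (lam * of_real \<tau>0)) * (\<Sum>j<N. c j * (2 * kk \<mu> lam j / ((kk \<mu> lam j)\<^sup>2 - (\<rho> i)\<^sup>2)))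
     = lam + of_real \<alpha>"
proof -
  define D where "D j = (\<rho> i)\<^sup>2 - (kk \<mu> lam j)\<^sup>2" for j
  define Z where "Z = exp (lam * complex_of_real \<tau>0) * (lam + complex_of_real \<alpha>) / 2"
  have Dfac: "D j = (\<rho> i - kk \<mu> lam j) * (\<rho> i + kk \<mu> lam j)" for j
    unfolding D_def by (simp add: power2_eq_square algebra_simps)
  have Dnz: "\<forall>j<N. D j \<noteq> 0"
  proof (intro allI impI)
    fix j assume "j < N"
    then have "kk \<mu> lam j + \<rho> i \<noteq> 0" "kk \<mu> lam j - \<rho> i \<noteq> 0" using hk i by auto
    then have "\<rho> i - kk \<mu> lam j \<noteq> 0" "\<rho> i + kk \<mu> lam j \<noteq> 0"
      by (metis minus_diff_eq neg_equal_0_iff_equal, simp add: add.commute)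
    then show "D j \<noteq> 0" unfolding Dfac by simp
  qed
  have "Z * (\<Prod>j<N. D j) + (\<Sum>i<N. c i * kk \<mu> lam i * (\<Prod>j\<in>{..<N} - {i}. D j)) = 0"
    using P0 unfolding Ppoly_def Z_def D_def .
  from Pdiv[OF Dnz this] have s: "(\<Sum>j<N. c j * kk \<mu> lam j / D j) = - Z" .
  have "(\<Sum>j<N. c j * (2 * kk \<mu> lam j / ((kk \<mu> lam j)\<^sup>2 - (\<rho> i)\<^sup>2))) = (- 2) * (\<Sum>j<N. c j * kk \<mu> lam j / D j)"
    unfolding sum_distrib_left
  proof (rule sum.cong[OF refl])
    fix j assume "j \<in> {..<N}"
    have "(kk \<mu> lam j)\<^sup>2 - (\<rho> i)\<^sup>2 = - D j" unfolding D_def by simp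
    then show "c j * (2 * kk \<mu> lam j / ((kk \<mu> lam j)\<^sup>2 - (\<rho> i)\<^sup>2)) = - 2 * (c j * kk \<mu> lam j / D j)"
      by (simp add: divide_minus_right)
  qed
  also have "\<dots> = exp (lam * complex_of_real \<tau>0) * (lam + complex_of_real \<alpha>)" using s unfolding Z_def by simp
  finally have "(\<Sum>j<N. c j * (2 * kk \<mu> lam j / ((kk \<mu> lam j)\<^sup>2 - (\<rho> i)\<^sup>2))) =
     exp (lam * complex_of_real \<tau>0) * (lam + complex_of_real \<alpha>)" .
  moreover have "exp (- (lam * of_real \<tau>0)) * exp (lam * complex_of_real \<tau>0) = 1"
    by (simp add: exp_minus)
  ultimately show ?thesis by (simp add: mult.assoc[symmetric])
qed

lemma q_nonzero:
  fixes N :: nat and \<rho> :: "nat \<Rightarrow> complex" and \<Gamma> :: "complex vec"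
  assumes rho: "\<forall>i<N. \<forall>j<N. i \<noteq> j \<longrightarrow> \<rho> i \<noteq> \<rho> j \<and> \<rho> i \<noteq> - \<rho> j"
    and rho2: "\<forall>i<N. \<rho> i \<noteq> - \<rho> i"
    and G: "\<Gamma> \<in> carrier_vec (2*N)" "\<Gamma> \<noteq> 0\<^sub>v (2*N)"
  shows "\<exists>x\<in>{-1..1}. qfun N \<rho> \<Gamma> x \<noteq> 0"
proof (rule ccontr)
  assume "\<not> ?thesis"
  then have z: "\<forall>x\<in>{-1..1}. qfun N \<rho> \<Gamma> x = 0" by auto
  define a where "a m = (if m < N then \<rho> m else - \<rho> (m - N))" for m
  define b where "b m = \<Gamma> $ m" for m
  have inj: "inj_on a {..<2*N}"
  proof (rule inj_onI)
    fix m m' assume m: "m \<in> {..<2*N}" and m': "m' \<in> {..<2*N}" and e: "a m = a m'"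
    show "m = m'"
    proof (cases "m < N"; cases "m' < N")
      assume "m < N" "m' < N" then show ?thesis using e rho by (auto simp: a_def)
    next
      assume h: "m < N" "\<not> m' < N"
      then have "m' - N < N" using m' by auto
      then show ?thesis using e rho rho2 h
        by (cases "m = m' - N") (auto simp: a_def)
    next
      assume h: "\<not> m < N" "m' < N"
      then have "m - N < N" using m by auto
      show ?thesis
      proof (cases "m' = m - N")
        case True
        then show ?thesis using e rho2 h \<open>m - N < N\<close> by (auto simp: a_def)
      next
        case False
        then have "\<rho> m' \<noteq> - \<rho> (m - N)" using rho h \<open>m - N < N\<close> by blast
        then show ?thesis using e h by (auto simp: a_def)
      qed
    next
      assume h: "\<not> m < N" "\<not> m' < N"
      then have "m - N < N" "m' - N < N" using m m' by auto
      then have "m - N = m' - N" using e rho h by (auto simp: a_def)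
      then show ?thesis using h by simp
    qed
  qed
  have "\<forall>x\<in>{-1<..<1::real}. (\<Sum>m\<in>{..<2*N}. b m * exp (a m * of_real x)) = 0"
  proof
    fix x :: real assume "x \<in> {-1<..<1}"
    then have "qfun N \<rho> \<Gamma> x = 0" using z by auto
    moreover have "(\<Sum>m<2*N. b m * exp (a m * of_real x)) = qfun N \<rho> \<Gamma> x"
      unfolding split2 qfun_def by (simp add: a_def b_def sum.distrib)
    ultimately show "(\<Sum>m\<in>{..<2*N}. b m * exp (a m * of_real x)) = 0" by simp
  qed
  from exp_indep[OF finite_lessThan inj this] have "\<forall>m<2*N. \<Gamma> $ m = 0" by (simp add: b_def)
  then have "\<Gamma> = 0\<^sub>v (2*N)" using G(1) by (intro eq_vecI) auto
  with G(2) show False by simp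
qed

lemma eig_main:
  fixes N :: nat and \<alpha> \<tau>0 :: real and c \<mu> \<rho> :: "nat \<Rightarrow> complex" and lam :: complex and \<Gamma> :: "complex vec"
  assumes tau: "\<tau>0 \<ge> 0"
    and rho: "\<forall>i<N. \<forall>j<N. i \<noteq> j \<longrightarrow> \<rho> i \<noteq> \<rho> j \<and> \<rho> i \<noteq> - \<rho> j"
    and rho2: "\<forall>i<N. \<rho> i \<noteq> - \<rho> i"
    and roots: "{z. Ppoly N \<alpha> \<tau>0 c \<mu> lam z = 0} = \<rho> ` {..<N} \<union> (\<lambda>i. - \<rho> i) ` {..<N}"
    and kne: "\<forall>i<N. \<forall>j<N. kk \<mu> lam j \<noteq> \<rho> i \<and> kk \<mu> lam j \<noteq> - \<rho> i"
    and G: "\<Gamma> \<in> carrier_vec (2*N)" "\<Gamma> \<noteq> 0\<^sub>v (2*N)" "Smat N \<mu> \<rho> lam *\<^sub>v \<Gamma> = 0\<^sub>v (2*N)"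
  shows "eigenfunction N \<alpha> \<tau>0 c \<mu> lam (eps_tensor lam (qfun N \<rho> \<Gamma>))"
proof -
  let ?q = "qfun N \<rho> \<Gamma>"
  let ?\<phi> = "eps_tensor lam ?q"
  have qc: "continuous_on {-1..1} ?q" unfolding qfun_def by (intro continuous_intros)
  have hk: "\<forall>i<N. \<forall>j<N. kk \<mu> lam j + \<rho> i \<noteq> 0 \<and> kk \<mu> lam j - \<rho> i \<noteq> 0"
  proof (intro allI impI conjI)
    fix i j assume "i < N" "j < N"
    then have "kk \<mu> lam j \<noteq> \<rho> i" "kk \<mu> lam j \<noteq> - \<rho> i" using kne by auto
    then show "kk \<mu> lam j + \<rho> i \<noteq> 0" "kk \<mu> lam j - \<rho> i \<noteq> 0"
      by (simp_all add: eq_neg_iff_add_eq_0)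
  qed
  have P: "\<forall>i<N. exp (- (lam * of_real \<tau>0)) * (\<Sum>j<N. c j * (2 * kk \<mu> lam j / ((kk \<mu> lam j)\<^sup>2 - (\<rho> i)\<^sup>2)))
     = lam + of_real \<alpha>"
  proof (intro allI impI)
    fix i assume i: "i < N"
    have "\<rho> i \<in> {z. Ppoly N \<alpha> \<tau>0 c \<mu> lam z = 0}" unfolding roots using i by auto
    then have "Ppoly N \<alpha> \<tau>0 c \<mu> lam (\<rho> i) = 0" by simp
    from Pfact[OF hk i this] show "exp (- (lam * of_real \<tau>0)) * (\<Sum>j<N. c j * (2 * kk \<mu> lam j / ((kk \<mu> lam j)\<^sup>2 - (\<rho> i)\<^sup>2)))
     = lam + of_real \<alpha>" .
  qed
  note R = mat_rows[OF G(1) G(3)]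
  have Lq: "Lop N c \<mu> \<tau>0 ?\<phi> x = (lam + of_real \<alpha>) * ?q x" if x: "x \<in> {-1..1}" for x
  proof -
    have "Lop N c \<mu> \<tau>0 ?\<phi> x = (\<Sum>j<N. \<Sum>i<N. exp (- (lam * of_real \<tau>0)) * c j *
       (\<Gamma> $ i * Iint (kk \<mu> lam j) (\<rho> i) x + \<Gamma> $ (N+i) * Iint (kk \<mu> lam j) (- \<rho> i) x))"
      by (rule Lop_eq[OF hk x])
    also have "\<dots> = (lam + of_real \<alpha>) * (\<Sum>i<N. \<Gamma> $ i * exp (\<rho> i * of_real x) + \<Gamma> $ (N+i) * exp (- \<rho> i * of_real x))"
      by (rule alg[where g="\<lambda>m. \<Gamma> $ m" and k="kk \<mu> lam", OF hk R(1) R(2) P])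
    also have "\<dots> = (lam + of_real \<alpha>) * ?q x" by (simp add: qfun_def)
    finally show ?thesis .
  qed
  have psi: "(\<lambda>\<theta> x. lam * ?\<phi> \<theta> x) = eps_tensor lam (\<lambda>x. lam * ?q x)"
    by (auto simp: eps_tensor_def fun_eq_iff algebra_simps)
  have qc2: "continuous_on {-1..1} (\<lambda>x. lam * ?q x)" using qc by (intro continuous_intros)
  have Arel: "A_rel N \<alpha> \<tau>0 c \<mu> ?\<phi> (\<lambda>\<theta> x. lam * ?\<phi> \<theta> x)"
    unfolding A_rel_def
  proof (intro conjI ballI)
    show "inX (\<tau>0 + 2) ?\<phi>" by (rule eps_inX[OF qc])
    show "inX (\<tau>0 + 2) (\<lambda>\<theta> x. lam * ?\<phi> \<theta> x)" unfolding psi by (rule eps_inX[OF qc2])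
    show "hasXderiv (\<tau>0 + 2) ?\<phi> (\<lambda>\<theta> x. lam * ?\<phi> \<theta> x)" by (rule eps_deriv[OF qc])
    fix x :: real assume x: "x \<in> {-1..1}"
    show "lam * ?\<phi> 0 x = - complex_of_real \<alpha> * ?\<phi> 0 x + Lop N c \<mu> \<tau>0 ?\<phi> x"
      unfolding Lq[OF x] by (simp add: eps_tensor_def algebra_simps)
  qed
  have nz: "\<not> Xzero (\<tau>0 + 2) ?\<phi>"
  proof
    assume "Xzero (\<tau>0 + 2) ?\<phi>"
    moreover have "(0::real) \<in> {-(\<tau>0 + 2)..0}" using tau by simp
    ultimately have "\<forall>x\<in>{-1..1}. ?q x = 0" unfolding Xzero_def by (auto simp: eps_tensor_def)
    with q_nonzero[OF rho rho2 G(1) G(2)] show False by blast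
  qed
  show ?thesis unfolding eigenfunction_def using nz Arel by blast
qed

theorem theorem3p17:
  fixes N :: nat and \<alpha> \<tau>0 :: real and c \<mu> \<rho> :: "nat \<Rightarrow> complex" and lam :: complex
  assumes "N \<ge> 1" and "\<alpha> > 0" and "\<tau>0 \<ge> 0"
    and "\<forall>i<N. c i \<noteq> 0"
    and "\<forall>i<N. \<forall>j<N. i \<noteq> j \<longrightarrow> \<mu> i \<noteq> \<mu> j"
    and "lam \<notin> Sset N \<mu>"
    and "\<forall>i<N. \<forall>j<N. i \<noteq> j \<longrightarrow> \<rho> i \<noteq> \<rho> j \<and> \<rho> i \<noteq> - \<rho> j"
    and "\<forall>i<N. \<rho> i \<noteq> - \<rho> i"
    and "{z. Ppoly N \<alpha> \<tau>0 c \<mu> lam z = 0} = \<rho> ` {..<N} \<union> (\<lambda>i. - \<rho> i) ` {..<N}"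
    and "det (Smat N \<mu> \<rho> lam) = 0"
    and "\<forall>i<N. \<forall>j<N. kk \<mu> lam j \<noteq> \<rho> i \<and> kk \<mu> lam j \<noteq> - \<rho> i"
  shows "lam \<in> point_spectrum N \<alpha> \<tau>0 c \<mu> \<and>
    (\<forall>\<Gamma> \<in> carrier_vec (2 * N). \<Gamma> \<noteq> 0\<^sub>v (2 * N) \<and> Smat N \<mu> \<rho> lam *\<^sub>v \<Gamma> = 0\<^sub>v (2 * N) \<longrightarrow>
       eigenfunction N \<alpha> \<tau>0 c \<mu> lam (eps_tensor lam (qfun N \<rho> \<Gamma>)))"
proof -
  have all: "\<forall>\<Gamma> \<in> carrier_vec (2 * N). \<Gamma> \<noteq> 0\<^sub>v (2 * N) \<and> Smat N \<mu> \<rho> lam *\<^sub>v \<Gamma> = 0\<^sub>v (2 * N) \<longrightarrow>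
       eigenfunction N \<alpha> \<tau>0 c \<mu> lam (eps_tensor lam (qfun N \<rho> \<Gamma>))"
    using eig_main[OF assms(3) assms(7) assms(8) assms(9) assms(11)] by blast
  have car: "Smat N \<mu> \<rho> lam \<in> carrier_mat (2*N) (2*N)" by (simp add: Smat_def)
  obtain \<Gamma> where "\<Gamma> \<in> carrier_vec (2*N)" "\<Gamma> \<noteq> 0\<^sub>v (2*N)" "Smat N \<mu> \<rho> lam *\<^sub>v \<Gamma> = 0\<^sub>v (2*N)"
    using det_0_iff_vec_prod_zero[OF car] assms(10) by blast
  with all have "eigenfunction N \<alpha> \<tau>0 c \<mu> lam (eps_tensor lam (qfun N \<rho> \<Gamma>))" by blast
  then have "lam \<in> point_spectrum N \<alpha> \<tau>0 c \<mu>" unfolding point_spectrum_def by blast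
  with all show ?thesis by blast
qed

end
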